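(* Let $R$ be a generalized p.q.-Baer $*$-ring whose projections form a lattice. The following are equivalent: (1) $R$ satisfies the parallelogram law; (2) whenever projections $e,f\in R$ are in position $p'$, $e\sim f$.
   Context: A $*$-ring is a ring with an involution; a projection is $e$ with $e=e^*=e^2$, ordered by $e\le f\iff e=ef$. $R$ is a generalized p.q.-Baer $*$-ring if for every $x\in R$ there are $n\in\mathbb N$ and a projection $e$ with $r_R((xR)^n)=eR$, where $r_R(S)=\{a: sa=0\ \forall s\in S\}$. Projections $e,f$ are equivalent, $e\sim f$, if there is $w\in R$ with $w^*w=e$ and $ww^*=f$. A $*$-ring whose projections form a lattice satisfies the parallelogram law if $e-e\wedge f\sim e\vee f-f$ for all projections $e,f$. Projections $e,f$ in a $*$-ring with unity whose projections form a lattice are in position $p'$ if $e\wedge(1-f)=(1-e)\wedge f=0$. In the paper, the lattice operations are related to generalized central covers $GC$ (smallest central projection $e$ with $x^ne=x^n$ for some $n$) by $e\vee f=f+GC(e(1-f))$ and $e\wedge f=e-GC(e(1-f))$. *)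

theory Defs
  imports Main
begin

definition star_ring :: "('a::ring_1 \<Rightarrow> 'a) \<Rightarrow> bool" where
  "star_ring s \<longleftrightarrow> (\<forall>x y. s (x + y) = s x + s y) \<and> (\<forall>x y. s (x * y) = s y * s x)
     \<and> (\<forall>x. s (s x) = x)"

definition proj :: "('a::ring_1 \<Rightarrow> 'a) \<Rightarrow> 'a \<Rightarrow> bool" where
  "proj s e \<longleftrightarrow> e = s e \<and> e = e * e"

definition proj_le :: "'a::ring_1 \<Rightarrow> 'a \<Rightarrow> bool" where
  "proj_le e f \<longleftrightarrow> e = e * f"

definition r_ann :: "'a::ring_1 set \<Rightarrow> 'a set" where
  "r_ann S = {a. \<forall>x\<in>S. x * a = 0}"

definition right_ideal_gen :: "'a::ring_1 \<Rightarrow> 'a set" where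
  "right_ideal_gen x = {x * r | r. True}"

(* products of n elements of S; its right annihilator equals that of the ideal power S^n *)
definition set_pow :: "'a::ring_1 set \<Rightarrow> nat \<Rightarrow> 'a set" where
  "set_pow S n = {prod_list xs | xs. length xs = n \<and> set xs \<subseteq> S}"

definition gen_pq_baer :: "('a::ring_1 \<Rightarrow> 'a) \<Rightarrow> bool" where
  "gen_pq_baer s \<longleftrightarrow> star_ring s \<and>
     (\<forall>x. \<exists>n\<ge>1. \<exists>e. proj s e \<and> r_ann (set_pow (right_ideal_gen x) n) = right_ideal_gen e)"

definition proj_equiv :: "('a::ring_1 \<Rightarrow> 'a) \<Rightarrow> 'a \<Rightarrow> 'a \<Rightarrow> bool" where
  "proj_equiv s e f \<longleftrightarrow> (\<exists>w. s w * w = e \<and> w * s w = f)"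

definition is_pglb :: "('a::ring_1 \<Rightarrow> 'a) \<Rightarrow> 'a \<Rightarrow> 'a \<Rightarrow> 'a \<Rightarrow> bool" where
  "is_pglb s e f g \<longleftrightarrow> proj s g \<and> proj_le g e \<and> proj_le g f \<and>
     (\<forall>h. proj s h \<and> proj_le h e \<and> proj_le h f \<longrightarrow> proj_le h g)"

definition is_plub :: "('a::ring_1 \<Rightarrow> 'a) \<Rightarrow> 'a \<Rightarrow> 'a \<Rightarrow> 'a \<Rightarrow> bool" where
  "is_plub s e f g \<longleftrightarrow> proj s g \<and> proj_le e g \<and> proj_le f g \<and>
     (\<forall>h. proj s h \<and> proj_le e h \<and> proj_le f h \<longrightarrow> proj_le g h)"

definition proj_lattice :: "('a::ring_1 \<Rightarrow> 'a) \<Rightarrow> bool" where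
  "proj_lattice s \<longleftrightarrow> (\<forall>e f. proj s e \<and> proj s f \<longrightarrow>
     (\<exists>g. is_pglb s e f g) \<and> (\<exists>g. is_plub s e f g))"

definition pmeet :: "('a::ring_1 \<Rightarrow> 'a) \<Rightarrow> 'a \<Rightarrow> 'a \<Rightarrow> 'a" where
  "pmeet s e f = (THE g. is_pglb s e f g)"

definition pjoin :: "('a::ring_1 \<Rightarrow> 'a) \<Rightarrow> 'a \<Rightarrow> 'a \<Rightarrow> 'a" where
  "pjoin s e f = (THE g. is_plub s e f g)"

definition parallelogram_law :: "('a::ring_1 \<Rightarrow> 'a) \<Rightarrow> bool" where
  "parallelogram_law s \<longleftrightarrow> (\<forall>e f. proj s e \<and> proj s f \<longrightarrow>
     proj_equiv s (e - pmeet s e f) (pjoin s e f - f))"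

definition position_p' :: "('a::ring_1 \<Rightarrow> 'a) \<Rightarrow> 'a \<Rightarrow> 'a \<Rightarrow> bool" where
  "position_p' s e f \<longleftrightarrow> pmeet s e (1 - f) = 0 \<and> pmeet s (1 - e) f = 0"

end

theory Submission
  imports Defs
begin

lemma st_add: "star_ring s \<Longrightarrow> s (x + y) = s x + s y" by (simp add: star_ring_def)
lemma st_mult: "star_ring s \<Longrightarrow> s (x * y) = s y * s x" by (simp add: star_ring_def)
lemma st_inv: "star_ring s \<Longrightarrow> s (s x) = x" by (simp add: star_ring_def)

lemma st_0: assumes "star_ring s" shows "s 0 = 0"
proof -
  have "s (0 + 0) = s 0 + s 0" using st_add[OF assms] .
  thus ?thesis by simp
qed

lemma st_1: assumes "star_ring s" shows "s 1 = (1::'a::ring_1)"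
proof -
  have "s (s 1 * 1) = s 1 * s (s 1)" using st_mult[OF assms] .
  hence "s (s 1) = s 1" using st_inv[OF assms] by simp
  thus ?thesis using st_inv[OF assms] by simp
qed

lemma st_minus: assumes "star_ring s" shows "s (x - y) = s x - s (y::'a::ring_1)"
proof -
  have "s ((x - y) + y) = s (x - y) + s y" using st_add[OF assms] .
  thus ?thesis by (simp add: algebra_simps)
qed

lemma proj_compl: assumes "star_ring s" "proj s e" shows "proj s (1 - e)"
  using assms unfolding proj_def by (simp add: st_minus st_1 algebra_simps)

lemma orth: assumes "star_ring s" "proj s a" "proj s b" "a * b = 0" shows "b * a = 0"
proof -
  have "s (a * b) = s b * s a" using st_mult[OF assms(1)] .
  hence "b * a = s 0" using assms unfolding proj_def by metis
  thus ?thesis using st_0[OF assms(1)] by simp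
qed

lemma le_comm: assumes "star_ring s" "proj s e" "proj s f" "proj_le e f" shows "f * e = e"
proof -
  have "s (e * f) = s f * s e" using st_mult[OF assms(1)] .
  thus ?thesis using assms unfolding proj_def proj_le_def by metis
qed

lemma le_antisym: assumes "star_ring s" "proj s g" "proj s h" "proj_le g h" "proj_le h g"
  shows "g = h"
  using le_comm[OF assms(1,3,2,5)] assms(4) unfolding proj_le_def by simp

lemma meet_prop: assumes "star_ring s" "proj_lattice s" "proj s e" "proj s f"
  shows "is_pglb s e f (pmeet s e f)"
proof -
  obtain g where g: "is_pglb s e f g" using assms unfolding proj_lattice_def by blast
  have "pmeet s e f = g" unfolding pmeet_def
  proof (rule the_equality)
    fix g' assume "is_pglb s e f g'"
    thus "g' = g" using g le_antisym[OF assms(1)] unfolding is_pglb_def by blast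
  qed (rule g)
  thus ?thesis using g by simp
qed

lemma join_prop: assumes "star_ring s" "proj_lattice s" "proj s e" "proj s f"
  shows "is_plub s e f (pjoin s e f)"
proof -
  obtain g where g: "is_plub s e f g" using assms unfolding proj_lattice_def by blast
  have "pjoin s e f = g" unfolding pjoin_def
  proof (rule the_equality)
    fix g' assume "is_plub s e f g'"
    thus "g' = g" using g le_antisym[OF assms(1)] unfolding is_plub_def by blast
  qed (rule g)
  thus ?thesis using g by simp
qed

lemma meet_zero: assumes "star_ring s" "proj_lattice s" "proj s e" "proj s f"
  and "\<And>h. proj s h \<Longrightarrow> proj_le h e \<Longrightarrow> proj_le h f \<Longrightarrow> h = 0"
  shows "pmeet s e f = 0"
proof -
  have m: "is_pglb s e f (pmeet s e f)" using meet_prop[OF assms(1-4)] .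
  thus ?thesis using assms(5) unfolding is_pglb_def by blast
qed

theorem mainTheorem12:
  fixes s :: "'a::ring_1 \<Rightarrow> 'a"
  assumes "gen_pq_baer s" and "proj_lattice s"
  shows "parallelogram_law s \<longleftrightarrow>
    (\<forall>e f. proj s e \<and> proj s f \<and> position_p' s e f \<longrightarrow> proj_equiv s e f)"
proof -
  have S: "star_ring s" using assms(1) unfolding gen_pq_baer_def by simp
  note L = assms(2)
  show ?thesis
  proof
    assume PL: "parallelogram_law s"
    show "\<forall>e f. proj s e \<and> proj s f \<and> position_p' s e f \<longrightarrow> proj_equiv s e f"
    proof (intro allI impI)
      fix e f assume H: "proj s e \<and> proj s f \<and> position_p' s e f"
      hence pe: "proj s e" and pf: "proj s f" and m1: "pmeet s e (1 - f) = 0"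
        and m2: "pmeet s (1 - e) f = 0" unfolding position_p'_def by auto
      have pf': "proj s (1 - f)" using proj_compl[OF S pf] .
      have pe': "proj s (1 - e)" using proj_compl[OF S pe] .
      define g where "g = pjoin s e (1 - f)"
      have gl: "is_plub s e (1 - f) g" unfolding g_def using join_prop[OF S L pe pf'] .
      have pg: "proj s g" using gl unfolding is_plub_def by simp
      have pk: "proj s (1 - g)" using proj_compl[OF S pg] .
      have eg: "e = e * g" using gl unfolding is_plub_def proj_le_def by simp
      have fg: "1 - f = (1 - f) * g" using gl unfolding is_plub_def proj_le_def by simp
      have ek: "e * (1 - g) = 0" using eg by (simp add: algebra_simps)
      have ke: "(1 - g) * e = 0" using orth[OF S pe pk ek] .
      have fk: "(1 - f) * (1 - g) = 0" using fg by (metis diff_self mult.right_neutral right_diff_distrib)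
      have kf: "(1 - g) * (1 - f) = 0" using orth[OF S pf' pk fk] .
      have le1: "proj_le (1 - g) (1 - e)" unfolding proj_le_def using ke by (simp add: algebra_simps)
      have le2: "proj_le (1 - g) f" unfolding proj_le_def using kf by (simp add: algebra_simps)
      have "proj_le (1 - g) (pmeet s (1 - e) f)"
        using meet_prop[OF S L pe' pf] pk le1 le2 unfolding is_pglb_def by blast
      hence "1 - g = 0" using m2 unfolding proj_le_def by simp
      hence g1: "g = 1" by simp
      have "proj_equiv s (e - pmeet s e (1 - f)) (pjoin s e (1 - f) - (1 - f))"
        using PL pe pf' unfolding parallelogram_law_def by blast
      thus "proj_equiv s e f" using m1 g1 g_def by simp
    qed
  next
    assume P2: "\<forall>e f. proj s e \<and> proj s f \<and> position_p' s e f \<longrightarrow> proj_equiv s e f"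
    show "parallelogram_law s" unfolding parallelogram_law_def
    proof (intro allI impI)
      fix e f assume "proj s e \<and> proj s f"
      hence pe: "proj s e" and pf: "proj s f" by auto
      define m where "m = pmeet s e f"
      define j where "j = pjoin s e f"
      have ml: "is_pglb s e f m" unfolding m_def using meet_prop[OF S L pe pf] .
      have jl: "is_plub s e f j" unfolding j_def using join_prop[OF S L pe pf] .
      have pm: "proj s m" using ml unfolding is_pglb_def by simp
      have pj: "proj s j" using jl unfolding is_plub_def by simp
      have me: "m * e = m" and mf: "m * f = m" using ml unfolding is_pglb_def proj_le_def by auto
      have em: "e * m = m" using le_comm[OF S pm pe] me unfolding proj_le_def by simp
      have fm: "f * m = m" using le_comm[OF S pm pf] mf unfolding proj_le_def by simp
      have ej: "e * j = e" and fj: "f * j = f" using jl unfolding is_plub_def proj_le_def by auto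
      have je: "j * e = e" using le_comm[OF S pe pj] ej unfolding proj_le_def by simp
      have jf: "j * f = f" using le_comm[OF S pf pj] fj unfolding proj_le_def by simp
      have ee: "e * e = e" and se: "s e = e" using pe unfolding proj_def by auto
      have ff: "f * f = f" and sf: "s f = f" using pf unfolding proj_def by auto
      have mm: "m * m = m" and sm: "s m = m" using pm unfolding proj_def by auto
      have jj: "j * j = j" and sj: "s j = j" using pj unfolding proj_def by auto
      have pe1: "proj s (e - m)" unfolding proj_def
        using se sm ee em me mm by (simp add: st_minus[OF S] algebra_simps)
      have pf1: "proj s (j - f)" unfolding proj_def
        using sf sj ff jf fj jj by (simp add: st_minus[OF S] algebra_simps)
      have pfc: "proj s (1 - (j - f))" using proj_compl[OF S pf1] .
      have pec: "proj s (1 - (e - m))" using proj_compl[OF S pe1] .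
      have A: "pmeet s (e - m) (1 - (j - f)) = 0"
      proof (rule meet_zero[OF S L pe1 pfc])
        fix h assume ph: "proj s h" and h1: "proj_le h (e - m)" and h2: "proj_le h (1 - (j - f))"
        have hh1: "h = h * (e - m)" using h1 unfolding proj_le_def .
        have "h * e = h * (e - m) * e" using hh1 by simp
        also have "\<dots> = h * (e - m)" by (simp add: mult.assoc algebra_simps ee me)
        finally have he: "h * e = h" using hh1 by simp
        have hf': "h * (j - f) = 0" using h2 unfolding proj_le_def by (simp add: algebra_simps)
        have hj: "h * j = h" using he ej by (metis mult.assoc)
        have hf: "h = h * f" using hf' hj by (simp add: algebra_simps)
        have "proj_le h m" using ml ph he hf unfolding is_pglb_def proj_le_def by metis
        hence "h * m = h" unfolding proj_le_def by simp
        thus "h = 0" using hh1 he by (simp add: algebra_simps)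
      qed
      have B: "pmeet s (1 - (e - m)) (j - f) = 0"
      proof (rule meet_zero[OF S L pec pf1])
        fix h assume ph: "proj s h" and h1: "proj_le h (1 - (e - m))" and h2: "proj_le h (j - f)"
        have hh2: "h = h * (j - f)" using h2 unfolding proj_le_def .
        have he': "h * (e - m) = 0" using h1 unfolding proj_le_def by (simp add: algebra_simps)
        have "h * f = h * (j - f) * f" using hh2 by simp
        also have "\<dots> = 0" by (simp add: mult.assoc algebra_simps ff jf)
        finally have hf: "h * f = 0" .
        have hm: "h * m = 0" using hf fm by (metis mult.assoc mult_zero_left)
        have he: "h * e = 0" using he' hm by (simp add: algebra_simps)
        have "h * j = h * (j - f) * j" using hh2 by simp
        also have "\<dots> = h * (j - f)" by (simp add: mult.assoc algebra_simps jj fj)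
        finally have hj: "h * j = h" using hh2 by simp
        have pk: "proj s (1 - h)" using proj_compl[OF S ph] .
        have eh: "e * h = 0" using orth[OF S ph pe he] .
        have fh: "f * h = 0" using orth[OF S ph pf hf] .
        have "proj_le e (1 - h)" "proj_le f (1 - h)" unfolding proj_le_def
          using eh fh by (simp_all add: algebra_simps)
        hence "proj_le j (1 - h)" using jl pk unfolding is_plub_def by blast
        hence jh: "j * h = 0" unfolding proj_le_def by (simp add: algebra_simps)
        have "h * j = 0" using orth[OF S pj ph jh] .
        thus "h = 0" using hj by simp
      qed
      have "position_p' s (e - m) (j - f)" unfolding position_p'_def using A B by simp
      hence "proj_equiv s (e - m) (j - f)" using P2 pe1 pf1 by blast
      thus "proj_equiv s (e - pmeet s e f) (pjoin s e f - f)" using m_def j_def by simp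
    qed
  qed
qed

end
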